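(* Let $\mathcal{V}$ be a finite vocabulary and let $q$ and $p$ be probability distributions on $\mathcal{V}$ (the draft and target next-token distributions at some step, conditioned on a fixed prefix). Fix a constant $0 < w \le 1$ and define the ensemble distribution $\nu(x) = w\,p(x) + (1-w)\,q(x)$ for $x \in \mathcal{V}$. Consider the verification scheme in which a draft token $\tilde{x} \sim q$ is sampled, and then accepted with probability $b_{\nu}(\tilde{x}) = \min\{1, \nu(\tilde{x})/q(\tilde{x})\}$; if rejected, a replacement token is drawn from the fallback distribution $P_{\nu}(x) = \frac{[\nu(x)-q(x)]_+}{\sum_{x'} [\nu(x')-q(x')]_+}$. Then \[ \mathbb{P}_{\nu}(\mathrm{reject}) + \mathrm{TV}(\nu, p) = \mathrm{TV}(q, p), \] where $\mathbb{P}_{\nu}(\mathrm{reject}) = \sum_{x\in\mathcal{V}} q(x)\bigl(1 - b_{\nu}(x)\bigr)$ is the probability that the draft token $\tilde{x}\sim q$ is rejected. In this sense the pair $(\nu, P_\nu)$ attains the Pareto front of the tradeoff between rejection probability and distributional bias.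
   Context: $\mathrm{TV}(\mu_1,\mu_2) = \frac12\sum_{x\in\mathcal{V}} |\mu_1(x)-\mu_2(x)|$ denotes total variation distance between distributions on $\mathcal{V}$, and $[a]_+ = \max\{a,0\}$. The ratio $\nu(x)/q(x)$ is only needed for $x$ with $q(x)>0$ (draft tokens are sampled from $q$). *)

theory Defs
  imports Complex_Main
begin

definition is_distribution :: "('a::finite \<Rightarrow> real) \<Rightarrow> bool" where
  "is_distribution \<mu> \<longleftrightarrow> (\<forall>x. 0 \<le> \<mu> x) \<and> (\<Sum>x\<in>UNIV. \<mu> x) = 1"

definition TV :: "('a::finite \<Rightarrow> real) \<Rightarrow> ('a \<Rightarrow> real) \<Rightarrow> real" where
  "TV \<mu>1 \<mu>2 = (1/2) * (\<Sum>x\<in>UNIV. \<bar>\<mu>1 x - \<mu>2 x\<bar>)"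

definition ensemble :: "real \<Rightarrow> ('a \<Rightarrow> real) \<Rightarrow> ('a \<Rightarrow> real) \<Rightarrow> 'a \<Rightarrow> real" where
  "ensemble w p q x = w * p x + (1 - w) * q x"

(* acceptance probability b_nu(x) = min{1, nu(x)/q(x)}; only meaningful for q x > 0 *)
definition accept_prob :: "('a \<Rightarrow> real) \<Rightarrow> ('a \<Rightarrow> real) \<Rightarrow> 'a \<Rightarrow> real" where
  "accept_prob \<nu> q x = min 1 (\<nu> x / q x)"

definition fallback :: "('a::finite \<Rightarrow> real) \<Rightarrow> ('a \<Rightarrow> real) \<Rightarrow> 'a \<Rightarrow> real" where
  "fallback \<nu> q x = max (\<nu> x - q x) 0 / (\<Sum>x'\<in>UNIV. max (\<nu> x' - q x') 0)"

definition reject_prob :: "('a::finite \<Rightarrow> real) \<Rightarrow> ('a \<Rightarrow> real) \<Rightarrow> real" where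
  "reject_prob \<nu> q = (\<Sum>x\<in>{x. q x > 0}. q x * (1 - accept_prob \<nu> q x))"

end

theory Submission
  imports Defs
begin

theorem proposition1:
  fixes q p :: "'a::finite \<Rightarrow> real" and w :: real
  assumes "is_distribution q" and "is_distribution p"
    and "0 < w" and "w \<le> 1"
  shows "reject_prob (ensemble w p q) q + TV (ensemble w p q) p = TV q p"
proof -
  let ?v = "ensemble w p q"
  have q0: "\<And>x. 0 \<le> q x" and qs: "(\<Sum>x\<in>UNIV. q x) = 1"
    using assms(1) by (auto simp: is_distribution_def)
  have p0: "\<And>x. 0 \<le> p x" and ps: "(\<Sum>x\<in>UNIV. p x) = 1"
    using assms(2) by (auto simp: is_distribution_def)
  have trm: "q x * (1 - accept_prob ?v q x) = w * max 0 (q x - p x)" if "q x > 0" for x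
  proof -
    have "q x * (1 - min 1 (?v x / q x)) = max 0 (q x - ?v x)"
      using that by (auto simp: min_def max_def field_simps)
    also have "q x - ?v x = w * (q x - p x)" by (simp add: ensemble_def algebra_simps)
    also have "max 0 (w * (q x - p x)) = w * max 0 (q x - p x)"
      using assms(3) by (simp add: max_def mult_le_0_iff zero_le_mult_iff)
    finally show ?thesis by (simp add: accept_prob_def)
  qed
  have R: "reject_prob ?v q = w * (\<Sum>x\<in>UNIV. max 0 (q x - p x))"
  proof -
    have "reject_prob ?v q = (\<Sum>x\<in>{x. q x > 0}. w * max 0 (q x - p x))"
      unfolding reject_prob_def by (rule sum.cong) (auto simp: trm)
    also have "\<dots> = (\<Sum>x\<in>UNIV. w * max 0 (q x - p x))"
    proof (rule sum.mono_neutral_left)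
      show "\<forall>i\<in>UNIV - {x. q x > 0}. w * max 0 (q i - p i) = 0"
        using q0 p0 by (auto simp: max_def) (metis order.antisym not_less)
    qed auto
    finally show ?thesis by (simp add: sum_distrib_left)
  qed
  have half: "(\<Sum>x\<in>UNIV. max 0 (q x - p x)) = TV q p"
  proof -
    have "\<And>x. \<bar>q x - p x\<bar> = 2 * max 0 (q x - p x) - (q x - p x)" by (auto simp: max_def)
    then have "(\<Sum>x\<in>UNIV. \<bar>q x - p x\<bar>) = 2 * (\<Sum>x\<in>UNIV. max 0 (q x - p x)) - ((\<Sum>x\<in>UNIV. q x) - (\<Sum>x\<in>UNIV. p x))"
      by (simp add: sum_subtractf sum_distrib_left)
    then show ?thesis using qs ps by (simp add: TV_def)
  qed
  have T: "TV ?v p = (1 - w) * TV q p"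
  proof -
    have "\<And>x. \<bar>?v x - p x\<bar> = (1 - w) * \<bar>q x - p x\<bar>"
    proof -
      fix x
      have "?v x - p x = (1 - w) * (q x - p x)" by (simp add: ensemble_def algebra_simps)
      then show "\<bar>?v x - p x\<bar> = (1 - w) * \<bar>q x - p x\<bar>" using assms(4) by (simp add: abs_mult)
    qed
    then show ?thesis by (simp add: TV_def sum_distrib_left)
  qed
  show ?thesis using R half T by (simp add: algebra_simps)
qed

end
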